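(* Let $d\ge1$ and let $P\subseteq[2]^d$ be a permutation array of rank $2$ and dimension $d$. Then every set $S$ of $4$ elements of $P$ contains a subset $S'$ (with at least two elements) such that for every $1\le i\le d$ the value $\min\{x_i:\mathbf x\in S'\}$ is attained by at least two elements of $S'$.
   Context: $[r]=\{0,\dots,r\}$; $[r]^d$ is ordered coordinatewise ($\mathbf x\preceq\mathbf y$ iff $x_i\le y_i$ for all $i$) with meet the coordinatewise minimum. For $P\subseteq[r]^d$: $P$ is rankable of rank $t$ if each coordinate takes exactly $t+1$ distinct values on elements of $P$. $P$ is totally rankable if every principal subarray $\{\mathbf y\in P:\mathbf y\succeq\mathbf x\}$, $\mathbf x\in[r]^d$, is rankable. A point $\mathbf x$ is redundant for $P$ if $\mathbf x$ is the coordinatewise minimum of some $\mathcal H\subseteq P$ with $|\mathcal H|\ge2$ whose every member shares at least one coordinate with $\mathbf x$. A permutation array of rank $r$ and dimension $d$ is a totally rankable $P\subseteq[r]^d$ of rank $r$ containing no redundant points. *)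

theory Defs
  imports Main
begin

text \<open>Points of [r]^d are lists of naturals of length d with entries at most r;
  coordinate i (paper: i+1) is x ! i for i < d.\<close>

definition grid :: "nat \<Rightarrow> nat \<Rightarrow> nat list set" where
  "grid r d = {x. length x = d \<and> (\<forall>i<d. x ! i \<le> r)}"

definition preceq :: "nat \<Rightarrow> nat list \<Rightarrow> nat list \<Rightarrow> bool" where
  "preceq d x y \<longleftrightarrow> (\<forall>i<d. x ! i \<le> y ! i)"

definition coord_vals :: "nat \<Rightarrow> nat list set \<Rightarrow> nat set" where
  "coord_vals i P = (\<lambda>x. x ! i) ` P"

definition rankable_of_rank :: "nat \<Rightarrow> nat list set \<Rightarrow> nat \<Rightarrow> bool" where
  "rankable_of_rank d P t \<longleftrightarrow> (\<forall>i<d. card (coord_vals i P) = t + 1)"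

text \<open>Rankable: every coordinate takes the same number of distinct values
  (this number is t+1 for rank t; the empty array, with 0 values, counts as rankable).\<close>
definition rankable :: "nat \<Rightarrow> nat list set \<Rightarrow> bool" where
  "rankable d P \<longleftrightarrow> (\<exists>k. \<forall>i<d. card (coord_vals i P) = k)"

definition totally_rankable :: "nat \<Rightarrow> nat \<Rightarrow> nat list set \<Rightarrow> bool" where
  "totally_rankable r d P \<longleftrightarrow>
     (\<forall>x\<in>grid r d. rankable d {y\<in>P. preceq d x y})"

definition meet :: "nat \<Rightarrow> nat list set \<Rightarrow> nat list" where
  "meet d H = map (\<lambda>i. Min (coord_vals i H)) [0..<d]"

definition redundant :: "nat \<Rightarrow> nat list set \<Rightarrow> nat list \<Rightarrow> bool" where
  "redundant d P x \<longleftrightarrow>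
     (\<exists>H. H \<subseteq> P \<and> finite H \<and> card H \<ge> 2 \<and> x = meet d H \<and>
          (\<forall>h\<in>H. \<exists>i<d. h ! i = x ! i))"

definition permutation_array :: "nat \<Rightarrow> nat \<Rightarrow> nat list set \<Rightarrow> bool" where
  "permutation_array r d P \<longleftrightarrow>
     P \<subseteq> grid r d \<and> totally_rankable r d P \<and> rankable_of_rank d P r \<and>
     (\<forall>x\<in>P. \<not> redundant d P x)"

end

theory Submission
  imports Defs
begin

lemma finite_grid: "finite (grid r d)"
proof -
  have "grid r d \<subseteq> {xs. set xs \<subseteq> {0..r} \<and> length xs = d}"
    by (auto simp: grid_def in_set_conv_nth)
  moreover have "finite {xs. set xs \<subseteq> {0..r} \<and> length xs = d}"
    by (rule finite_lists_length_eq) simp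
  ultimately show ?thesis by (rule finite_subset)
qed

definition vecA :: "nat \<Rightarrow> nat set \<Rightarrow> nat \<Rightarrow> nat list" where
  "vecA d A v = map (\<lambda>j. if j \<in> A then v else 0) [0..<d]"

lemma vecA_grid: "v \<le> r \<Longrightarrow> vecA d A v \<in> grid r d"
  by (auto simp: vecA_def grid_def)

lemma vecA_le: "preceq d (vecA d A v) y \<longleftrightarrow> (\<forall>j<d. j \<in> A \<longrightarrow> v \<le> y ! j)"
  by (auto simp: vecA_def preceq_def)

lemma collapse:
  assumes tr: "totally_rankable r d P" and PG: "P \<subseteq> grid r d" and x: "x \<in> grid r d"
    and q: "q \<in> P" "preceq d x q" and s: "s \<in> P" "preceq d x s" and b: "b < d"
    and c: "\<forall>y\<in>P. preceq d x y \<longrightarrow> y ! b = c"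
  shows "q = s"
proof -
  define U where "U = {y\<in>P. preceq d x y}"
  have "rankable d U" using tr x unfolding totally_rankable_def U_def by blast
  then obtain k where k: "\<forall>i<d. card (coord_vals i U) = k" unfolding rankable_def by blast
  have qU: "q \<in> U" and sU: "s \<in> U" using q s by (auto simp: U_def)
  have "coord_vals b U = {c}" using c qU unfolding coord_vals_def U_def by force
  then have k1: "k = 1" using k b by force
  have "\<forall>i<d. q ! i = s ! i"
  proof (intro allI impI)
    fix i assume i: "i < d"
    have "card (coord_vals i U) = 1" using k k1 i by simp
    then obtain z where "coord_vals i U = {z}" by (auto simp: card_Suc_eq)
    moreover have "q ! i \<in> coord_vals i U" "s ! i \<in> coord_vals i U"
      using qU sU by (auto simp: coord_vals_def)
    ultimately show "q ! i = s ! i" by simp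
  qed
  moreover have "length q = d" "length s = d" using q s PG by (auto simp: grid_def)
  ultimately show ?thesis by (metis nth_equalityI)
qed

lemma two_unique:
  assumes tr: "totally_rankable 2 d P" and PG: "P \<subseteq> grid 2 d"
    and p: "p \<in> P" and q: "q \<in> P" and i: "i < d" and "p ! i \<ge> 2" "q ! i \<ge> 2"
  shows "p = q"
proof (rule collapse[OF tr PG vecA_grid[of 2 2 d "{i}"] p(1) _ q(1) _ i, where c=2])
  show "preceq d (vecA d {i} 2) p" "preceq d (vecA d {i} 2) q"
    using assms by (auto simp: vecA_le)
  show "\<forall>y\<in>P. preceq d (vecA d {i} 2) y \<longrightarrow> y ! i = 2"
  proof (intro ballI impI)
    fix y assume "y \<in> P" "preceq d (vecA d {i} 2) y"
    then have "y ! i \<ge> 2" using i by (auto simp: vecA_le)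
    moreover have "y ! i \<le> 2" using \<open>y \<in> P\<close> i PG by (auto simp: grid_def)
    ultimately show "y ! i = 2" by simp
  qed
qed simp

lemma key:
  assumes tr: "totally_rankable 2 d P" and PG: "P \<subseteq> grid 2 d"
    and p: "p \<in> P" and q: "q \<in> P" and s: "s \<in> P" and a: "a < d" and b: "b < d"
    and pa: "p ! a \<ge> 1" and qa: "q ! a \<ge> 1" and sa: "s ! a \<ge> 1"
    and pb: "p ! b = 0" and qb: "q ! b \<ge> 1" and sb: "s ! b \<ge> 1"
  shows "q = s"
proof -
  have fin: "finite P" using PG finite_grid finite_subset by blast
  define U where "U = {y\<in>P. preceq d (vecA d {a} 1) y}"
  have "rankable d U" using tr vecA_grid[of 1 2 d "{a}"] unfolding totally_rankable_def U_def by auto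
  then obtain k where k: "\<forall>i<d. card (coord_vals i U) = k" unfolding rankable_def by blast
  have finU: "finite (coord_vals i U)" for i using fin by (auto simp: U_def coord_vals_def)
  have "coord_vals a U \<subseteq> {1,2}"
  proof
    fix z assume "z \<in> coord_vals a U"
    then obtain y where "y \<in> P" "preceq d (vecA d {a} 1) y" "z = y ! a"
      by (auto simp: coord_vals_def U_def)
    then have "z \<ge> 1" "z \<le> 2" using a PG by (auto simp: vecA_le grid_def)
    then show "z \<in> {1,2}" by auto
  qed
  then have "card (coord_vals a U) \<le> 2"
    using card_mono[of "{1,2::nat}" "coord_vals a U"] by simp
  then have cb: "card (coord_vals b U) \<le> 2" using k a b by simp
  have pU: "p \<in> U" using p pa a by (auto simp: U_def vecA_le)
  have qU: "q \<in> U" using q qa a by (auto simp: U_def vecA_le)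
  show ?thesis
  proof (rule collapse[OF tr PG vecA_grid[of 1 2 d "{a,b}"] q _ s _ b, where c="q ! b"])
    show "preceq d (vecA d {a, b} 1) q" "preceq d (vecA d {a, b} 1) s"
      using qa qb sa sb by (auto simp: vecA_le)
    show "\<forall>y\<in>P. preceq d (vecA d {a, b} 1) y \<longrightarrow> y ! b = q ! b"
    proof (intro ballI impI)
      fix y assume y: "y \<in> P" "preceq d (vecA d {a, b} 1) y"
      then have yU: "y \<in> U" and yb: "y ! b \<ge> 1" using a b by (auto simp: U_def vecA_le)
      show "y ! b = q ! b"
      proof (rule ccontr)
        assume ne: "y ! b \<noteq> q ! b"
        have "{0, q ! b, y ! b} \<subseteq> coord_vals b U"
          using pU qU yU pb by (auto simp: coord_vals_def image_iff)
        moreover have "card {0, q ! b, y ! b} = 3" using ne qb yb by auto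
        ultimately have "card (coord_vals b U) \<ge> 3" by (metis card_mono finU)
        then show False using cb by simp
      qed
    qed
  qed simp
qed

theorem mainTheorem19:
  fixes d :: nat and P :: "nat list set"
  assumes "d \<ge> 1" and "permutation_array 2 d P"
  shows "\<forall>S. S \<subseteq> P \<and> card S = 4 \<longrightarrow>
           (\<exists>S'. S' \<subseteq> S \<and> card S' \<ge> 2 \<and>
              (\<forall>i<d. \<exists>a\<in>S'. \<exists>b\<in>S'. a \<noteq> b \<and>
                   a ! i = Min (coord_vals i S') \<and> b ! i = Min (coord_vals i S')))"
proof (intro allI impI)
  fix S assume SS: "S \<subseteq> P \<and> card S = 4"
  have PG: "P \<subseteq> grid 2 d" and tr: "totally_rankable 2 d P"
    using assms(2) by (auto simp: permutation_array_def)
  have finS: "finite S" using SS by (metis card.infinite zero_neq_numeral)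
  have SP: "S \<subseteq> P" using SS by simp
  have le2: "\<And>y j. y \<in> P \<Longrightarrow> j < d \<Longrightarrow> y ! j \<le> 2" using PG by (auto simp: grid_def)
  show "\<exists>S'. S' \<subseteq> S \<and> card S' \<ge> 2 \<and>
              (\<forall>i<d. \<exists>a\<in>S'. \<exists>b\<in>S'. a \<noteq> b \<and>
                   a ! i = Min (coord_vals i S') \<and> b ! i = Min (coord_vals i S'))"
  proof (cases "\<forall>i<d. \<exists>a\<in>S. \<exists>b\<in>S. a \<noteq> b \<and>
                   a ! i = Min (coord_vals i S) \<and> b ! i = Min (coord_vals i S)")
    case True
    then show ?thesis using SS by (intro exI[of _ S]) auto
  next
    case False
    then obtain i where i: "i < d" and nu: "\<not> (\<exists>a\<in>S. \<exists>b\<in>S. a \<noteq> b \<and>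
                   a ! i = Min (coord_vals i S) \<and> b ! i = Min (coord_vals i S))" by blast
    have Sne: "S \<noteq> {}" using SS by auto
    have "Min (coord_vals i S) \<in> coord_vals i S"
      using finS Sne by (intro Min_in) (auto simp: coord_vals_def)
    then obtain s1 where s1: "s1 \<in> S" "s1 ! i = Min (coord_vals i S)" by (auto simp: coord_vals_def)
    have ti: "t ! i \<ge> 1" if "t \<in> S" "t \<noteq> s1" for t
    proof -
      have "t ! i \<ge> Min (coord_vals i S)" using finS that by (intro Min_le) (auto simp: coord_vals_def)
      moreover have "t ! i \<noteq> Min (coord_vals i S)" using nu s1 that by metis
      ultimately show ?thesis by simp
    qed
    define T where "T = S - {s1}"
    have finT: "finite T" using finS by (simp add: T_def)
    have cT: "card T = 3" using SS s1 finS by (simp add: T_def)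
    have TS: "T \<subseteq> S" by (auto simp: T_def)
    have Ti: "\<And>t. t \<in> T \<Longrightarrow> t ! i \<ge> 1" using ti by (auto simp: T_def)
    have TP: "T \<subseteq> P" using TS SP by auto
    show ?thesis
    proof (intro exI[of _ T] conjI allI impI)
      show "T \<subseteq> S" by (rule TS)
      show "card T \<ge> 2" using cT by simp
      fix k assume k: "k < d"
      define m where "m = Min (coord_vals k T)"
      have Tne: "T \<noteq> {}" using cT by auto
      have "m \<in> coord_vals k T"
        unfolding m_def using finT Tne by (intro Min_in) (auto simp: coord_vals_def)
      then obtain t0 where t0: "t0 \<in> T" "t0 ! k = m" by (auto simp: coord_vals_def)
      have mle: "\<And>t. t \<in> T \<Longrightarrow> m \<le> t ! k"
        unfolding m_def using finT by (intro Min_le) (auto simp: coord_vals_def)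
      show "\<exists>a\<in>T. \<exists>b\<in>T. a \<noteq> b \<and> a ! k = Min (coord_vals k T) \<and> b ! k = Min (coord_vals k T)"
      proof (rule ccontr)
        assume nc: "\<not> ?thesis"
        have gt: "\<And>t. t \<in> T \<Longrightarrow> t \<noteq> t0 \<Longrightarrow> t ! k > m"
          using nc t0 mle m_def by (metis le_neq_implies_less)
        have "card (T - {t0}) = 2" using cT t0 finT by simp
        then obtain t1 t2 where t12: "T - {t0} = {t1, t2}" "t1 \<noteq> t2" by (auto simp: card_2_iff)
        have t1: "t1 \<in> T" "t1 \<noteq> t0" and t2: "t2 \<in> T" "t2 \<noteq> t0" using t12 by blast+
        show False
        proof (cases "m = 0")
          case True
          have "t1 = t2"
            by (rule key[OF tr PG _ _ _ i k, of t0]) (use t0 t1 t2 TP Ti gt True in \<open>auto simp: Suc_le_eq\<close>)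
          then show False using t12 by simp
        next
          case False
          have "m < t1 ! k" "m < t2 ! k" using gt t1 t2 by auto
          then have "2 \<le> t1 ! k" "2 \<le> t2 ! k" using False by auto
          then have "t1 = t2"
            by (intro two_unique[OF tr PG _ _ k]) (use t1 t2 TP in auto)
          then show False using t12 by simp
        qed
      qed
    qed
  qed
qed

end
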